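(* Let $X^{2n}$ be a quasitoric manifold over a simple polytope $P^n$, $T^{n-1}\subset T^n$ a subtorus, $Q^{n+1}=X^{2n}/T^{n-1}$, and $p\colon Q^{n+1}\to P^n=X^{2n}/T^n$ the projection of the residual $T^n/T^{n-1}$-action. For $x\in P^n$, the preimage $p^{-1}(x)$ is a circle if and only if $x$ is special (and otherwise it is a point).
   Context: For each facet $F$ of $P^n$, $\lambda(F)\in N=\mathrm{Hom}(T^1,T^n)\cong\mathbb{Z}^n$ is the primitive vector of the circle subgroup of $T^n$ stabilizing points of $X^{2n}$ over the interior of $F$. Let $\Pi\subset N$ be the image of $\mathrm{Hom}(T^1,T^{n-1})$ (the kernel of $N\to\mathrm{Hom}(T^1,T^n/T^{n-1})$). A facet $F$ is special if $\lambda(F)\in\Pi$; a proper face is special if all facets containing it are special. A point $x\in P^n$ is special if it lies in the relative interior of a special face. *)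

theory Defs
  imports "HOL-Analysis.Analysis"
begin

definition quotient_topology :: "'a topology \<Rightarrow> ('a \<Rightarrow> 'b) \<Rightarrow> 'b topology" where
  "quotient_topology X f =
     topology (\<lambda>U. U \<subseteq> f ` topspace X \<and> openin X {y \<in> topspace X. f y \<in> U})"

text \<open>Integer vectors viewed as real vectors (lattice N = Z^n inside R^n = Lie algebra of T^n).\<close>
definition rv :: "int^'n \<Rightarrow> real^'n" where
  "rv k = (\<chi> i. real_of_int (k $ i))"

definition int_lattice :: "(real^'n) set" where
  "int_lattice = range rv"

definition idot :: "int^'n \<Rightarrow> int^'n \<Rightarrow> int" where
  "idot a b = (\<Sum>i\<in>UNIV. a $ i * b $ i)"

definition char_vecs :: "(real^'n) set \<Rightarrow> ((real^'n) set \<Rightarrow> int^'n) \<Rightarrow> real^'n \<Rightarrow> (real^'n) set" where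
  "char_vecs P lam x = {rv (lam F) | F. F facet_of P \<and> x \<in> F}"

definition simple_polytope :: "(real^'n) set \<Rightarrow> bool" where
  "simple_polytope P \<longleftrightarrow> polytope P \<and> aff_dim P = int CARD('n) \<and>
     (\<forall>v. {v} face_of P \<longrightarrow> card {F. F facet_of P \<and> v \<in> F} = CARD('n))"

text \<open>Characteristic function of a quasitoric manifold over P: at every vertex the
characteristic vectors of the n facets through it form a Z-basis of N = Z^n.\<close>
definition characteristic_function :: "(real^'n) set \<Rightarrow> ((real^'n) set \<Rightarrow> int^'n) \<Rightarrow> bool" where
  "characteristic_function P lam \<longleftrightarrow>
     (\<forall>v. {v} face_of P \<longrightarrow>
        {\<Sum>F\<in>{F. F facet_of P \<and> v \<in> F}. k F *s lam F | k. True} = UNIV)"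

text \<open>Canonical model X = (T^n x P)/~, with T^n = R^n/Z^n: the point (t,x) is
identified with (t',x) iff t - t' lies in the stabilizer subtorus T_x generated
by the characteristic vectors of the facets containing x.\<close>
definition qX :: "(real^'n) set \<Rightarrow> ((real^'n) set \<Rightarrow> int^'n) \<Rightarrow>
    (real^'n) \<times> (real^'n) \<Rightarrow> ((real^'n) \<times> (real^'n)) set" where
  "qX P lam vx = {(w, y). y \<in> P \<and> y = snd vx \<and>
      (\<exists>a b. a \<in> int_lattice \<and> b \<in> span (char_vecs P lam y) \<and> fst vx - w = a + b)}"

definition X_space :: "(real^'n) set \<Rightarrow> ((real^'n) set \<Rightarrow> int^'n) \<Rightarrow>
    ((real^'n) \<times> (real^'n)) set topology" where
  "X_space P lam = quotient_topology (prod_topology euclidean (top_of_set P)) (qX P lam)"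

text \<open>Quotient Q = X / T^{n-1}, where the subtorus T^{n-1} has Lie algebra
{v. c . v = 0} and lattice Pi = {k in Z^n. c . k = 0}.\<close>
definition qQ :: "(real^'n) set \<Rightarrow> ((real^'n) set \<Rightarrow> int^'n) \<Rightarrow> int^'n \<Rightarrow>
    ((real^'n) \<times> (real^'n)) set \<Rightarrow> ((real^'n) \<times> (real^'n)) set" where
  "qQ P lam c z = {(w, y). \<exists>v. (v, y) \<in> z \<and> y \<in> P \<and>
      (\<exists>a b h. a \<in> int_lattice \<and> b \<in> span (char_vecs P lam y) \<and> rv c \<bullet> h = 0 \<and>
               v - w = a + b + h)}"

definition Q_space :: "(real^'n) set \<Rightarrow> ((real^'n) set \<Rightarrow> int^'n) \<Rightarrow> int^'n \<Rightarrow>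
    ((real^'n) \<times> (real^'n)) set topology" where
  "Q_space P lam c = quotient_topology (X_space P lam) (qQ P lam c)"

definition fibre :: "(real^'n) set \<Rightarrow> ((real^'n) set \<Rightarrow> int^'n) \<Rightarrow> int^'n \<Rightarrow> real^'n \<Rightarrow>
    ((real^'n) \<times> (real^'n)) set set" where
  "fibre P lam c x = {q \<in> topspace (Q_space P lam c). \<exists>v. q = qQ P lam c (qX P lam (v, x))}"

definition special_facet :: "(real^'n) set \<Rightarrow> ((real^'n) set \<Rightarrow> int^'n) \<Rightarrow> int^'n \<Rightarrow> (real^'n) set \<Rightarrow> bool" where
  "special_facet P lam c F \<longleftrightarrow> F facet_of P \<and> idot c (lam F) = 0"

definition special_face :: "(real^'n) set \<Rightarrow> ((real^'n) set \<Rightarrow> int^'n) \<Rightarrow> int^'n \<Rightarrow> (real^'n) set \<Rightarrow> bool" where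
  "special_face P lam c G \<longleftrightarrow> G face_of P \<and> G \<noteq> {} \<and>
     (\<forall>F. F facet_of P \<and> G \<subseteq> F \<longrightarrow> special_facet P lam c F)"

definition special_point :: "(real^'n) set \<Rightarrow> ((real^'n) set \<Rightarrow> int^'n) \<Rightarrow> int^'n \<Rightarrow> real^'n \<Rightarrow> bool" where
  "special_point P lam c x \<longleftrightarrow> (\<exists>G. special_face P lam c G \<and> x \<in> rel_interior G)"

end

theory Submission
  imports Defs
begin


lemma istop_qt: "istopology (\<lambda>U. U \<subseteq> f ` topspace X \<and> openin X {y \<in> topspace X. f y \<in> U})"
proof -
  have 1: "{y \<in> topspace X. f y \<in> S \<inter> T} = {y \<in> topspace X. f y \<in> S} \<inter> {y \<in> topspace X. f y \<in> T}" for S T by auto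
  have 2: "{y \<in> topspace X. f y \<in> \<Union>K} = \<Union>((\<lambda>S. {y \<in> topspace X. f y \<in> S}) ` K)" for K by auto
  show ?thesis
    unfolding istopology_def 1 2 by (auto intro!: openin_Union)
qed

lemma openin_qt: "openin (quotient_topology X f) U \<longleftrightarrow> U \<subseteq> f ` topspace X \<and> openin X {y \<in> topspace X. f y \<in> U}"
  unfolding quotient_topology_def using istop_qt[of f X] by (simp add: topology_inverse')

lemma topspace_qt: "topspace (quotient_topology X f) = f ` topspace X"
proof -
  have e: "{y \<in> topspace X. f y \<in> f ` topspace X} = topspace X" by auto
  have "openin (quotient_topology X f) (f ` topspace X)" by (auto simp: openin_qt e)
  then have "f ` topspace X \<subseteq> topspace (quotient_topology X f)" by (rule openin_subset)
  moreover have "topspace (quotient_topology X f) \<subseteq> f ` topspace X"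
    using openin_qt[of X f "topspace (quotient_topology X f)"] by auto
  ultimately show ?thesis by blast
qed

lemma cont_qt: "continuous_map X (quotient_topology X f) f"
  unfolding continuous_map_def by (auto simp: openin_qt topspace_qt)



lemma rv_add: "rv (a + b) = rv a + rv b" by (simp add: rv_def vec_eq_iff)
lemma rv_diff: "rv (a - b) = rv a - rv b" by (simp add: rv_def vec_eq_iff)
lemma rv_minus: "rv (- a) = - rv a" by (simp add: rv_def vec_eq_iff)
lemma rv_zero: "rv 0 = 0" by (simp add: rv_def vec_eq_iff)
lemma rv_smult: "rv (j *s k) = of_int j *\<^sub>R rv k" by (simp add: rv_def vec_eq_iff)
lemma inner_rv: "rv a \<bullet> rv b = of_int (idot a b)"
  by (simp add: rv_def idot_def inner_vec_def)
lemma idot_diff: "idot c (a - b) = idot c a - idot c b"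
  by (simp add: idot_def algebra_simps sum_subtractf)
lemma idot_smult: "idot c (j *s k) = j * idot c k"
  by (simp add: idot_def sum_distrib_left algebra_simps)

lemma idot_self_pos: assumes "c \<noteq> 0" shows "0 < idot c c"
proof -
  obtain i where "c $ i \<noteq> 0" using assms by (auto simp: vec_eq_iff)
  then show ?thesis unfolding idot_def
    by (intro sum_pos2[of UNIV i]) (auto simp: zero_less_mult_iff linorder_neq_iff)
qed

lemma rv_nonzero: "c \<noteq> 0 \<Longrightarrow> rv c \<noteq> 0"
  by (auto simp: rv_def vec_eq_iff)

lemma lat_add: "a \<in> int_lattice \<Longrightarrow> b \<in> int_lattice \<Longrightarrow> a + b \<in> int_lattice"
  unfolding int_lattice_def by (auto simp flip: rv_add)
lemma lat_minus: "a \<in> int_lattice \<Longrightarrow> - a \<in> int_lattice"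
  unfolding int_lattice_def by (auto simp flip: rv_minus)
lemma lat_zero: "0 \<in> int_lattice"
  unfolding int_lattice_def by (auto simp flip: rv_zero)

definition dd :: "int^'n \<Rightarrow> nat" where
  "dd c = (LEAST n. 0 < n \<and> (\<exists>k. idot c k = int n))"

lemma dd_props: assumes "c \<noteq> 0" shows "0 < dd c" "\<exists>k. idot c k = int (dd c)"
proof -
  have ex: "0 < nat (idot c c) \<and> (\<exists>k. idot c k = int (nat (idot c c)))"
    using idot_self_pos[OF assms] by auto
  show "0 < dd c" "\<exists>k. idot c k = int (dd c)"
    using LeastI[of "\<lambda>n. 0 < n \<and> (\<exists>k. idot c k = int n)", OF ex] unfolding dd_def by auto
qed

lemma dd_dvd: assumes "c \<noteq> 0" shows "int (dd c) dvd idot c k"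
proof -
  obtain k0 where k0: "idot c k0 = int (dd c)" using dd_props[OF assms] by blast
  define d where "d = int (dd c)"
  have dpos: "0 < d" using dd_props[OF assms] d_def by simp
  define m where "m = idot c k"
  have r: "idot c (k - (m div d) *s k0) = m mod d"
    by (simp add: idot_diff idot_smult k0 m_def d_def minus_div_mult_eq_mod[symmetric] algebra_simps)
  show ?thesis
  proof (rule ccontr)
    assume "\<not> ?thesis"
    then have "m mod d \<noteq> 0" using m_def d_def by (simp add: dvd_eq_mod_eq_0)
    moreover have "0 \<le> m mod d" "m mod d < d" using dpos by auto
    ultimately have P: "0 < nat (m mod d) \<and> (\<exists>k. idot c k = int (nat (m mod d)))"
      using r by (intro conjI exI[of _ "k - (m div d) *s k0"]) auto
    have "dd c \<le> nat (m mod d)" unfolding dd_def by (rule Least_le, rule P)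
    then show False using \<open>m mod d < d\<close> \<open>0 \<le> m mod d\<close> d_def by linarith
  qed
qed



definition Rset :: "(real^'n) set \<Rightarrow> ((real^'n) set \<Rightarrow> int^'n) \<Rightarrow> int^'n \<Rightarrow> real^'n \<Rightarrow> (real^'n) set" where
  "Rset P lam c y = {u. \<exists>a b h. a \<in> int_lattice \<and> b \<in> span (char_vecs P lam y) \<and> rv c \<bullet> h = 0 \<and> u = a + b + h}"

definition phi :: "(real^'n) set \<Rightarrow> ((real^'n) set \<Rightarrow> int^'n) \<Rightarrow> int^'n \<Rightarrow> (real^'n) \<times> (real^'n) \<Rightarrow> ((real^'n) \<times> (real^'n)) set" where
  "phi P lam c p = qQ P lam c (qX P lam p)"

lemma R_zero: fixes P :: "(real^'n) set" shows "0 \<in> Rset P lam c y"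
  unfolding Rset_def using lat_zero by (intro CollectI exI[of _ "0::real^'n"]) (auto simp: span_zero)

lemma R_add: fixes P :: "(real^'n) set" shows "u \<in> Rset P lam c y \<Longrightarrow> u' \<in> Rset P lam c y \<Longrightarrow> u + u' \<in> Rset P lam c y"
  unfolding Rset_def
proof clarify
  fix a b h a' b' h' :: "real^'n"
  assume "a \<in> int_lattice" "b \<in> span (char_vecs P lam y)" "rv c \<bullet> h = 0"
     "a' \<in> int_lattice" "b' \<in> span (char_vecs P lam y)" "rv c \<bullet> h' = 0"
  then show "\<exists>a'' b'' h''. a'' \<in> int_lattice \<and> b'' \<in> span (char_vecs P lam y) \<and> rv c \<bullet> h'' = 0 \<and>
      a + b + h + (a' + b' + h') = a'' + b'' + h''"
    by (intro exI[of _ "a+a'"] exI[of _ "b+b'"] exI[of _ "h+h'"])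
       (auto simp: lat_add span_add inner_add_right algebra_simps)
qed

lemma R_minus: fixes P :: "(real^'n) set" shows "u \<in> Rset P lam c y \<Longrightarrow> - u \<in> Rset P lam c y"
  unfolding Rset_def
proof clarify
  fix a b h :: "real^'n"
  assume "a \<in> int_lattice" "b \<in> span (char_vecs P lam y)" "rv c \<bullet> h = 0"
  then show "\<exists>a'' b'' h''. a'' \<in> int_lattice \<and> b'' \<in> span (char_vecs P lam y) \<and> rv c \<bullet> h'' = 0 \<and>
      - (a + b + h) = a'' + b'' + h''"
    by (intro exI[of _ "-a"] exI[of _ "-b"] exI[of _ "-h"])
       (auto simp: lat_minus span_neg inner_minus_right algebra_simps)
qed

lemma mem_phi: "(w, y) \<in> phi P lam c (v, x) \<longleftrightarrow> y = x \<and> x \<in> P \<and> v - w \<in> Rset P lam c x"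
proof
  assume "(w, y) \<in> phi P lam c (v, x)"
  then obtain v' a1 b1 a b h where "y = x" "x \<in> P" "a1 \<in> int_lattice" "b1 \<in> span (char_vecs P lam x)"
     "v - v' = a1 + b1" "a \<in> int_lattice" "b \<in> span (char_vecs P lam x)" "rv c \<bullet> h = 0" "v' - w = a + b + h"
    unfolding phi_def qQ_def qX_def by auto
  moreover have "a1 + b1 \<in> Rset P lam c x"
    unfolding Rset_def using calculation by (intro CollectI exI[of _ a1] exI[of _ b1] exI[of _ 0]) auto
  moreover have "a + b + h \<in> Rset P lam c x"
    unfolding Rset_def using calculation by blast
  moreover have "v - w = (v - v') + (v' - w)" by simp
  ultimately show "y = x \<and> x \<in> P \<and> v - w \<in> Rset P lam c x"
    by (metis R_add)
next
  assume A: "y = x \<and> x \<in> P \<and> v - w \<in> Rset P lam c x"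
  then obtain a b h where abh: "a \<in> int_lattice" "b \<in> span (char_vecs P lam x)" "rv c \<bullet> h = 0" "v - w = a + b + h"
    unfolding Rset_def by blast
  have "(v,x) \<in> qX P lam (v,x)" unfolding qX_def using A lat_zero
    by (auto intro!: exI[of _ "0::real^'n"] span_zero)
  then show "(w, y) \<in> phi P lam c (v, x)"
    unfolding phi_def qQ_def using A abh by blast
qed

lemma phi_eq: assumes "x \<in> P"
  shows "phi P lam c (v, x) = phi P lam c (w, x) \<longleftrightarrow> v - w \<in> Rset P lam c x"
proof
  assume "phi P lam c (v, x) = phi P lam c (w, x)"
  moreover have "(w, x) \<in> phi P lam c (w, x)" using assms by (simp add: mem_phi R_zero)
  ultimately have "(w, x) \<in> phi P lam c (v, x)" by simp
  then show "v - w \<in> Rset P lam c x" by (simp add: mem_phi)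
next
  assume vw: "v - w \<in> Rset P lam c x"
  then have wv: "w - v \<in> Rset P lam c x" using R_minus[OF vw] by simp
  show "phi P lam c (v, x) = phi P lam c (w, x)"
  proof (rule set_eqI, clarify)
    fix u y
    have "v - u = (v - w) + (w - u)" "w - u = (w - v) + (v - u)" by simp_all
    then show "(u, y) \<in> phi P lam c (v, x) \<longleftrightarrow> (u, y) \<in> phi P lam c (w, x)"
      unfolding mem_phi using vw wv R_add by metis
  qed
qed

lemma phi_eq_fst: "phi P lam c (v, y) = phi P lam c (w, x) \<Longrightarrow> y \<in> P \<Longrightarrow> y = x"
  by (metis R_zero diff_self mem_phi)

lemma topspace_X: "topspace (X_space P lam) = qX P lam ` (UNIV \<times> P)"
  by (simp add: X_space_def topspace_qt)

lemma topspace_Q: "topspace (Q_space P lam c) = phi P lam c ` (UNIV \<times> P)"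
  by (simp add: Q_space_def topspace_qt topspace_X image_image phi_def)

lemma openin_Q: "openin (Q_space P lam c) U \<longleftrightarrow> U \<subseteq> phi P lam c ` (UNIV \<times> P) \<and>
    openin (prod_topology euclidean (top_of_set P)) {p \<in> UNIV \<times> P. phi P lam c p \<in> U}"
proof -
  have e: "{p \<in> UNIV \<times> P. qX P lam p \<in> {z \<in> qX P lam ` (UNIV \<times> P). qQ P lam c z \<in> U}} =
        {p \<in> UNIV \<times> P. phi P lam c p \<in> U}" by (auto simp: phi_def)
  have e2: "{y \<in> UNIV \<times> P. qX P lam y \<in> qX P lam ` (UNIV \<times> P) \<and> phi P lam c y \<in> U} = {p \<in> UNIV \<times> P. phi P lam c p \<in> U}" by auto
  show ?thesis
    unfolding Q_space_def openin_qt topspace_X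
    by (simp add: X_space_def openin_qt e image_image phi_def[symmetric] e2 del: mem_Sigma_iff) 
qed

lemma cont_phi: "continuous_map (prod_topology euclidean (top_of_set P)) (Q_space P lam c) (phi P lam c)"
proof -
  have "phi P lam c = qQ P lam c \<circ> qX P lam" by (rule ext) (simp add: phi_def)
  then show ?thesis unfolding Q_space_def X_space_def
    by (metis X_space_def cont_qt continuous_map_compose)
qed

lemma fibre_eq: "x \<in> P \<Longrightarrow> fibre P lam c x = (\<lambda>v. phi P lam c (v, x)) ` UNIV"
  unfolding fibre_def topspace_Q by (auto simp: phi_def)



lemma face_rel_interior_ex:
  fixes P :: "'a::euclidean_space set"
  assumes "polytope P" "x \<in> P"
  shows "\<exists>G. G face_of P \<and> x \<in> rel_interior G"
  using assms
proof (induction "nat (aff_dim P)" arbitrary: P rule: less_induct)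
  case less
  show ?case
  proof (cases "x \<in> rel_interior P")
    case True
    then show ?thesis using face_of_refl polytope_imp_convex less.prems by blast
  next
    case False
    have "closure P = P" using polytope_imp_closed less.prems closure_closed by blast
    then have "x \<in> rel_frontier P" using False less.prems by (simp add: rel_frontier_def)
    then obtain F where F: "F facet_of P" "x \<in> F"
      using rel_frontier_of_polyhedron polytope_imp_polyhedron less.prems by blast
    have pF: "polytope F" using F face_of_polytope_polytope less.prems facet_of_def by blast
    have aF: "aff_dim F = aff_dim P - 1" using F facet_of_def by blast
    have "aff_dim F \<ge> 0" using F aff_dim_negative_iff by (metis empty_iff not_less)
    then have "nat (aff_dim F) < nat (aff_dim P)" using aF by linarith
    then obtain G where "G face_of F" "x \<in> rel_interior G" using less.hyps pF F by blast
    then show ?thesis using F facet_of_def face_of_trans by blast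
  qed
qed

definition good :: "(real^'n) set \<Rightarrow> ((real^'n) set \<Rightarrow> int^'n) \<Rightarrow> int^'n \<Rightarrow> real^'n \<Rightarrow> bool" where
  "good P lam c y \<longleftrightarrow> (\<forall>F. F facet_of P \<and> y \<in> F \<longrightarrow> idot c (lam F) = 0)"

lemma special_iff_good:
  assumes "polytope P" "x \<in> P"
  shows "special_point P lam c x \<longleftrightarrow> good P lam c x"
proof
  assume "special_point P lam c x"
  then obtain G where G: "special_face P lam c G" "x \<in> rel_interior G" unfolding special_point_def by blast
  show "good P lam c x" unfolding good_def
  proof clarify
    fix F assume F: "F facet_of P" "x \<in> F"
    have "G \<subseteq> F"
      using subset_of_face_of[of F P G] F G face_of_imp_subset facet_of_def special_face_def by blast
    then show "idot c (lam F) = 0" using G F unfolding special_face_def special_facet_def by blast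
  qed
next
  assume g: "good P lam c x"
  obtain G where G: "G face_of P" "x \<in> rel_interior G" using face_rel_interior_ex assms by blast
  have "G \<noteq> {}" using G rel_interior_subset by blast
  moreover have "special_facet P lam c F" if "F facet_of P" "G \<subseteq> F" for F
    using that g G rel_interior_subset unfolding good_def special_facet_def by blast
  ultimately show "special_point P lam c x" unfolding special_point_def special_face_def using G by blast
qed

lemma good_span:
  assumes "good P lam c y"
  shows "span (char_vecs P lam y) \<subseteq> {h. rv c \<bullet> h = 0}"
proof (rule span_minimal)
  show "subspace {h. rv c \<bullet> h = 0}" by (rule subspace_hyperplane)
  show "char_vecs P lam y \<subseteq> {h. rv c \<bullet> h = 0}"
    using assms unfolding char_vecs_def good_def by (auto simp: inner_rv)
qed

lemma good_R:
  assumes "good P lam c y" "c \<noteq> 0" "u \<in> Rset P lam c y"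
  shows "\<exists>j::int. rv c \<bullet> u = of_int j * real (dd c)"
proof -
  obtain a b h where abh: "a \<in> int_lattice" "b \<in> span (char_vecs P lam y)" "rv c \<bullet> h = 0" "u = a + b + h"
    using assms(3) unfolding Rset_def by blast
  obtain k where k: "a = rv k" using abh unfolding int_lattice_def by blast
  obtain j where j: "idot c k = int (dd c) * j" using dd_dvd[OF assms(2), of k] by (auto elim: dvdE)
  have "rv c \<bullet> b = 0" using good_span[OF assms(1)] abh by blast
  then have "rv c \<bullet> u = of_int (idot c k)" using abh k by (simp add: inner_add_right inner_rv)
  then show ?thesis using j by (intro exI[of _ j]) simp
qed

lemma R_of_mult:
  assumes "c \<noteq> 0" "rv c \<bullet> u = of_int j * real (dd c)"
  shows "u \<in> Rset P lam c y"
proof -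
  obtain k0 where k0: "idot c k0 = int (dd c)" using dd_props[OF assms(1)] by blast
  define a where "a = rv (j *s k0)"
  have a: "a \<in> int_lattice" unfolding a_def int_lattice_def by blast
  have "rv c \<bullet> a = of_int j * real (dd c)"
    unfolding a_def inner_rv idot_smult k0 by simp
  then have "rv c \<bullet> (u - a) = 0" using assms(2) by (simp add: inner_diff_right)
  moreover have "u = a + 0 + (u - a)" by simp
  ultimately show ?thesis unfolding Rset_def using a span_zero by blast
qed

lemma notgood_R:
  assumes "\<not> good P lam c y"
  shows "u \<in> Rset P lam c y"
proof -
  obtain F where F: "F facet_of P" "y \<in> F" "idot c (lam F) \<noteq> 0" using assms unfolding good_def by blast
  define b0 where "b0 = rv (lam F)"
  have b0: "b0 \<in> span (char_vecs P lam y)" unfolding b0_def char_vecs_def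
    using F by (intro span_base) blast
  define t where "t = rv c \<bullet> b0"
  have t: "t \<noteq> 0" using F by (simp add: t_def b0_def inner_rv)
  define b where "b = ((rv c \<bullet> u) / t) *\<^sub>R b0"
  have b: "b \<in> span (char_vecs P lam y)" unfolding b_def using b0 span_mul by (simp add: span_scale)
  have "rv c \<bullet> (u - b) = 0" using t by (simp add: b_def inner_diff_right t_def)
  moreover have "u = 0 + b + (u - b)" by simp
  ultimately show ?thesis unfolding Rset_def using b lat_zero by blast
qed



lemma cis_eq_iff: "cis a = cis b \<longleftrightarrow> (\<exists>n::int. a = b + 2 * pi * n)"
  using sin_cos_eq_iff[of a b] by (auto simp: complex_eq_iff)

definition Gc :: "int^'n \<Rightarrow> real^'n \<Rightarrow> complex" where
  "Gc c v = cis (2 * pi * (rv c \<bullet> v) / real (dd c))"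

lemma Gc_eq: assumes "c \<noteq> 0"
  shows "Gc c v = Gc c w \<longleftrightarrow> (\<exists>j::int. rv c \<bullet> v - rv c \<bullet> w = of_int j * real (dd c))"
proof -
  have d: "real (dd c) > 0" using dd_props[OF assms] by simp
  have "(2 * pi * (rv c \<bullet> v) / real (dd c) = 2 * pi * (rv c \<bullet> w) / real (dd c) + 2 * pi * real_of_int n)
      \<longleftrightarrow> rv c \<bullet> v - rv c \<bullet> w = of_int n * real (dd c)" for n
  proof -
    have "2 * pi * (rv c \<bullet> v) / real (dd c) = 2 * pi * (rv c \<bullet> w) / real (dd c) + 2 * pi * real_of_int n
      \<longleftrightarrow> (2 * pi / real (dd c)) * (rv c \<bullet> v) = (2 * pi / real (dd c)) * (rv c \<bullet> w + of_int n * real (dd c))"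
      using d by (simp add: field_simps)
    also have "\<dots> \<longleftrightarrow> rv c \<bullet> v = rv c \<bullet> w + of_int n * real (dd c)"
      using d pi_gt_zero by (simp add: mult_cancel_left)
    finally show ?thesis by auto
  qed
  then show ?thesis unfolding Gc_def cis_eq_iff by simp
qed

lemma cont_Gc: "continuous (at v) (Gc c)"
  unfolding Gc_def cis_conv_exp divide_inverse by (intro continuous_intros)

lemma W_open:
  assumes "polytope P"
  shows "openin (top_of_set P) {y \<in> P. good P lam c y}"
proof -
  define C where "C = \<Union>{F. F facet_of P \<and> idot c (lam F) \<noteq> 0}"
  have fin: "finite {F. F facet_of P \<and> idot c (lam F) \<noteq> 0}"
    by (rule finite_subset[OF _ finite_polytope_faces[OF assms]]) (auto simp: facet_of_def)
  have "closed C" unfolding C_def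
    using assms fin by (intro closed_Union) (auto intro: face_of_imp_closed polytope_imp_convex polytope_imp_closed simp: facet_of_def)
  then have "openin (top_of_set P) (P - (P \<inter> C))"
    by (intro openin_diff closedin_closed_Int) auto
  moreover have "P - (P \<inter> C) = {y \<in> P. good P lam c y}" unfolding C_def good_def by auto
  ultimately show ?thesis by simp
qed

lemma homeomorphic_imp_space:
  "S homeomorphic T \<Longrightarrow> top_of_set S homeomorphic_space top_of_set T"
proof -
  assume "S homeomorphic T"
  then obtain f g where h: "homeomorphism S T f g" by (auto simp: homeomorphic_def)
  then have "homeomorphic_maps (top_of_set S) (top_of_set T) f g"
    unfolding homeomorphism_def homeomorphic_maps_def by auto
  then show ?thesis unfolding homeomorphic_space_def by blast
qed



lemma good_case:
  fixes P :: "(real^'n) set" and lam :: "(real^'n) set \<Rightarrow> int^'n" and c :: "int^'n" and x :: "real^'n"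
  assumes P: "polytope P" and x: "x \<in> P" and gx: "good P lam c x" and c: "c \<noteq> 0"
  shows "subtopology (Q_space P lam c) (fibre P lam c x) homeomorphic_space top_of_set (sphere (0::complex) 1)"
proof -
  define fib where "fib = fibre P lam c x"
  have fib: "fib = (\<lambda>v. phi P lam c (v, x)) ` UNIV" using fibre_eq[OF x] fib_def by simp
  define g where "g = (\<lambda>q. Gc c (SOME v. q = phi P lam c (v, x)))"
  have dpos: "real (dd c) > 0" using dd_props[OF c] by simp
  have GR: "Gc c v = Gc c w" if "v - w \<in> Rset P lam c y" "good P lam c y" for v w y
    using good_R[OF that(2) c that(1)] Gc_eq[OF c] by (simp add: inner_diff_right)
  have gphi: "g (phi P lam c (v, x)) = Gc c v" for v
  proof -
    have "phi P lam c (v, x) = phi P lam c ((SOME v'. phi P lam c (v, x) = phi P lam c (v', x)), x)"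
      by (rule someI[of _ v]) simp
    then have "(SOME v'. phi P lam c (v, x) = phi P lam c (v', x)) - v \<in> Rset P lam c x"
      using phi_eq[OF x] by metis
    then show ?thesis unfolding g_def using GR gx by metis
  qed
  have top: "topspace (subtopology (Q_space P lam c) fib) = fib"
    using fib x by (auto simp: topspace_Q)
  define W where "W = {y \<in> P. good P lam c y}"
  have Wo: "openin (top_of_set P) W" unfolding W_def by (rule W_open[OF P])
  have xW: "x \<in> W" using x gx W_def by simp
  have contg: "continuous_map (subtopology (Q_space P lam c) fib) euclidean g"
    unfolding continuous_map_def
  proof (intro conjI allI impI)
    show "g \<in> topspace (subtopology (Q_space P lam c) fib) \<rightarrow> topspace euclidean" by simp
    fix U :: "complex set" assume "openin euclidean U"
    then have oU: "open U" by simp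
    define T where "T = phi P lam c ` ((Gc c -` U) \<times> W)"
    have pre: "{p \<in> UNIV \<times> P. phi P lam c p \<in> T} = (Gc c -` U) \<times> W"
    proof
      show "(Gc c -` U) \<times> W \<subseteq> {p \<in> UNIV \<times> P. phi P lam c p \<in> T}"
        unfolding T_def W_def by auto
      show "{p \<in> UNIV \<times> P. phi P lam c p \<in> T} \<subseteq> (Gc c -` U) \<times> W"
      proof clarify
        fix v y assume "y \<in> P" "phi P lam c (v, y) \<in> T"
        then obtain v' y' where v': "Gc c v' \<in> U" "y' \<in> W" "phi P lam c (v, y) = phi P lam c (v', y')"
          unfolding T_def by auto
        then have "y = y'" using phi_eq_fst \<open>y \<in> P\<close> by blast
        then have "v - v' \<in> Rset P lam c y" using v' phi_eq \<open>y \<in> P\<close> by metis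
        then have "Gc c v = Gc c v'" using GR v' \<open>y = y'\<close> W_def by blast
        then show "v \<in> Gc c -` U \<and> y \<in> W" using v' \<open>y = y'\<close> by simp
      qed
    qed
    have "open (Gc c -` U)" using oU cont_Gc by (rule continuous_open_vimage)
    then have "openin (prod_topology euclidean (top_of_set P)) ((Gc c -` U) \<times> W)"
      using Wo by (simp add: openin_prod_Times_iff)
    moreover have "T \<subseteq> phi P lam c ` (UNIV \<times> P)" unfolding T_def W_def by auto
    ultimately have oT: "openin (Q_space P lam c) T" unfolding openin_Q pre by simp
    have "{q \<in> topspace (subtopology (Q_space P lam c) fib). g q \<in> U} = T \<inter> fib"
    proof -
      have "phi P lam c (v, x) \<in> T \<longleftrightarrow> Gc c v \<in> U" for v
      proof
        assume "phi P lam c (v, x) \<in> T"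
        then have "phi P lam c (v, x) \<in> T" by simp
        then obtain v' y' where v': "Gc c v' \<in> U" "y' \<in> W" "phi P lam c (v, x) = phi P lam c (v', y')"
          unfolding T_def by auto
        then have "x = y'" using phi_eq_fst x by blast
        then have "v - v' \<in> Rset P lam c x" using v' phi_eq x by metis
        then show "Gc c v \<in> U" using GR gx v' by metis
      next
        assume "Gc c v \<in> U" then show "phi P lam c (v, x) \<in> T" unfolding T_def using xW by auto
      qed
      then show ?thesis unfolding top fib using gphi x by (auto simp: topspace_Q)
    qed
    then show "openin (subtopology (Q_space P lam c) fib) {q \<in> topspace (subtopology (Q_space P lam c) fib). g q \<in> U}"
      unfolding openin_subtopology using oT by blast
  qed
  define u0 where "u0 = (1 / (rv c \<bullet> rv c)) *\<^sub>R rv c"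
  have cc: "rv c \<bullet> rv c \<noteq> 0" using rv_nonzero[OF c] by simp
  have cu0: "rv c \<bullet> u0 = 1" unfolding u0_def using cc by simp
  have img: "g ` fib = sphere 0 1"
  proof
    show "g ` fib \<subseteq> sphere 0 1" unfolding fib using gphi by (auto simp: Gc_def)
    show "sphere 0 1 \<subseteq> g ` fib"
    proof
      fix z :: complex assume "z \<in> sphere 0 1"
      then have z: "norm z = 1" by simp
      moreover have "z \<noteq> 0" using z by auto
      ultimately have "cis (Arg z) = z" using cis_Arg[of z] by (auto simp: sgn_div_norm)
      define v where "v = (Arg z * real (dd c) / (2 * pi)) *\<^sub>R u0"
      have "Gc c v = cis (Arg z)" unfolding Gc_def v_def using cu0 dpos by simp
      then show "z \<in> g ` fib" unfolding fib using gphi \<open>cis (Arg z) = z\<close> by (metis rangeI image_eqI)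
    qed
  qed
  have inj: "inj_on g fib"
  proof (rule inj_onI)
    fix q1 q2 assume "q1 \<in> fib" "q2 \<in> fib" "g q1 = g q2"
    then obtain v w where q: "q1 = phi P lam c (v, x)" "q2 = phi P lam c (w, x)" "Gc c v = Gc c w"
      unfolding fib using gphi by auto
    then obtain j :: int where "rv c \<bullet> v - rv c \<bullet> w = of_int j * real (dd c)" using Gc_eq[OF c] by blast
    then have "rv c \<bullet> (v - w) = of_int j * real (dd c)" by (simp add: inner_diff_right)
    then have "v - w \<in> Rset P lam c x" by (rule R_of_mult[OF c])
    then show "q1 = q2" using q phi_eq[OF x] by simp
  qed
  define K where "K = ((\<lambda>s. s *\<^sub>R u0) ` {0..real (dd c)}) \<times> {x}"
  have "compact ((\<lambda>s. s *\<^sub>R u0) ` {0..real (dd c)})"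
    by (intro compact_continuous_image continuous_intros) auto
  then have cK: "compactin (prod_topology euclidean (top_of_set P)) K"
    unfolding K_def using x by (auto simp: compactin_Times compactin_subtopology)
  have "phi P lam c ` K = fib"
  proof
    show "phi P lam c ` K \<subseteq> fib" unfolding K_def fib by auto
    show "fib \<subseteq> phi P lam c ` K"
    proof (clarsimp simp: fib)
      fix v
      define t where "t = rv c \<bullet> v"
      define j where "j = floor (t / real (dd c))"
      define s where "s = t - of_int j * real (dd c)"
      have "of_int j \<le> t / real (dd c)" "t / real (dd c) < of_int j + 1" unfolding j_def by linarith+
      then have s01: "0 \<le> s" "s \<le> real (dd c)" unfolding s_def using dpos by (auto simp: field_simps)
      have "rv c \<bullet> (v - s *\<^sub>R u0) = of_int j * real (dd c)"
        using cu0 by (simp add: inner_diff_right s_def t_def)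
      then have "v - s *\<^sub>R u0 \<in> Rset P lam c x" by (rule R_of_mult[OF c])
      then have "phi P lam c (v, x) = phi P lam c (s *\<^sub>R u0, x)" using phi_eq[OF x] by simp
      moreover have "(s *\<^sub>R u0, x) \<in> K" unfolding K_def using s01 by auto
      ultimately show "phi P lam c (v, x) \<in> phi P lam c ` K" by blast
    qed
  qed
  then have "compactin (Q_space P lam c) fib" using image_compactin[OF cK cont_phi, of lam c] by simp
  then have cs: "compact_space (subtopology (Q_space P lam c) fib)" by (rule compact_space_subtopology)
  have "homeomorphic_map (subtopology (Q_space P lam c) fib) (top_of_set (sphere (0::complex) 1)) g"
  proof (rule continuous_imp_homeomorphic_map)
    show "continuous_map (subtopology (Q_space P lam c) fib) (top_of_set (sphere 0 1)) g"
      using contg img top by (auto simp: continuous_map_in_subtopology)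
    show "compact_space (subtopology (Q_space P lam c) fib)" by (rule cs)
    show "Hausdorff_space (top_of_set (sphere (0::complex) 1))"
      by (intro Hausdorff_space_subtopology Hausdorff_space_euclidean)
    show "g ` topspace (subtopology (Q_space P lam c) fib) = topspace (top_of_set (sphere 0 1))"
      using img top by simp
    show "inj_on g (topspace (subtopology (Q_space P lam c) fib))" using inj top by simp
  qed
  then show ?thesis unfolding fib_def by (rule homeomorphic_map_imp_homeomorphic_space)
qed



theorem lemma2p5:
  fixes P :: "(real^'n) set" and lam :: "(real^'n) set \<Rightarrow> int^'n"
    and c :: "int^'n" and x :: "real^'n"
  assumes "simple_polytope P"
    and "characteristic_function P lam"
    and "c \<noteq> 0"
    and "x \<in> P"
  shows "(subtopology (Q_space P lam c) (fibre P lam c x)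
            homeomorphic_space top_of_set (sphere (0::real^2) 1)
          \<longleftrightarrow> special_point P lam c x)
       \<and> (\<not> special_point P lam c x \<longrightarrow> (\<exists>q. fibre P lam c x = {q}))"
proof -
  have P: "polytope P" using assms(1) simple_polytope_def by blast
  have sp: "special_point P lam c x \<longleftrightarrow> good P lam c x" using special_iff_good[OF P assms(4)] .
  show ?thesis
  proof (cases "good P lam c x")
    case True
    have "subtopology (Q_space P lam c) (fibre P lam c x) homeomorphic_space top_of_set (sphere (0::complex) 1)"
      by (rule good_case[OF P assms(4) True assms(3)])
    also have "top_of_set (sphere (0::complex) 1) homeomorphic_space top_of_set (sphere (0::real^2) 1)"
      by (intro homeomorphic_imp_space homeomorphic_spheres_gen) auto
    finally show ?thesis using sp True by simp
  next
    case False
    have fibq: "fibre P lam c x = {phi P lam c (0, x)}"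
    proof -
      have "phi P lam c (v, x) = phi P lam c (0, x)" for v
        using phi_eq[OF assms(4)] notgood_R[OF False] by blast
      then show ?thesis using fibre_eq[OF assms(4)] by auto
    qed
    have "\<not> subtopology (Q_space P lam c) (fibre P lam c x) homeomorphic_space top_of_set (sphere (0::real^2) 1)"
    proof
      assume "subtopology (Q_space P lam c) (fibre P lam c x) homeomorphic_space top_of_set (sphere (0::real^2) 1)"
      then obtain f g where hm: "homeomorphic_maps (subtopology (Q_space P lam c) (fibre P lam c x)) (top_of_set (sphere (0::real^2) 1)) f g"
        unfolding homeomorphic_space_def by blast
      have fg: "g y \<in> topspace (subtopology (Q_space P lam c) (fibre P lam c x)) \<and> f (g y) = y"
        if "y \<in> topspace (top_of_set (sphere (0::real^2) 1))" for y
        using hm that continuous_map_image_subset_topspace[of "top_of_set (sphere (0::real^2) 1)" _ g]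
        unfolding homeomorphic_maps_def by blast
      obtain u :: "real^2" where u: "norm u = 1" using vector_choose_size[of 1] by auto
      have "g u \<in> fibre P lam c x" "g (- u) \<in> fibre P lam c x" "f (g u) = u" "f (g (- u)) = - u"
        using fg[of u] fg[of "-u"] u by auto
      then have "u = - u" using fibq by auto
      then have "u + u = 0" by (subst (2) \<open>u = - u\<close>) simp
      then have "2 *\<^sub>R u = 0" by (simp add: scaleR_2)
      then have "u = 0" by simp
      then show False using u by simp
    qed
    then show ?thesis using sp False fibq by blast
  qed
qed

end
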